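(* Let $Q$ be a quiver of rank $3$ with no frozen vertices which is mutation-abundant, and let $\mathbf M=m_1m_2\cdots$ be an infinite reduced mutation sequence. Then exactly one of the following holds: (1) $Q^{(i)}_{\mathbf M}$ is acyclic for all sufficiently large $i$ (and then every sufficiently late mutation $m_i$ is at a source or sink of $Q^{(i-1)}_{\mathbf M}$); or (2) $Q^{(i)}_{\mathbf M}$ is an oriented 3-cycle for all sufficiently large $i$. In either case there is $i_0$ such that $m_i$ is cycle-preserving for $Q^{(i-1)}_{\mathbf M}$ for all $i>i_0$.
   Context: A quiver is a finite directed multigraph with no loops and no oriented 2-cycles; here all vertices are mutable. $Q|_S$ is the induced subquiver on $S$. Mutation $\mu_j$: for each path $i\to j\to k$ with $a$ arrows $i\to j$ and $b$ arrows $j\to k$ add $ab$ arrows $i\to k$, reverse all arrows at $j$, cancel 2-cycles. A mutation sequence $\mathbf M=m_1m_2\cdots$ has $Q^{(0)}_{\mathbf M}=Q$, $Q^{(i)}_{\mathbf M}=\mu_{m_i}(Q^{(i-1)}_{\mathbf M})$; reduced means $m_i\ne m_{i+1}$. A quiver without frozen vertices is mutation-abundant if every quiver mutation-equivalent to it has at least 2 arrows between every pair of vertices. A 3-vertex quiver is an oriented 3-cycle if its underlying directed graph is not acyclic. A vertex $j$ is cycle-preserving for $Q$ if whenever $Q|_{\{i,j,k\}}$ is an oriented 3-cycle containing $j$, so is $\mu_j(Q)|_{\{i,j,k\}}$. *)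

theory Defs
  imports Main
begin

text \<open>A quiver on vertex set V is represented by its arrow-count function:
  Q i j = number of arrows from i to j.\<close>

type_synonym quiver = "nat \<Rightarrow> nat \<Rightarrow> nat"

definition is_quiver :: "nat set \<Rightarrow> quiver \<Rightarrow> bool" where
  "is_quiver V Q \<longleftrightarrow> finite V
     \<and> (\<forall>i. Q i i = 0)
     \<and> (\<forall>i j. Q i j = 0 \<or> Q j i = 0)
     \<and> (\<forall>i j. i \<notin> V \<or> j \<notin> V \<longrightarrow> Q i j = 0)"

text \<open>Mutation at k: for each path i -> k -> j add products, reverse arrows at k,
  cancel 2-cycles.\<close>
definition mut :: "nat \<Rightarrow> quiver \<Rightarrow> quiver" where
  "mut k Q = (\<lambda>i j. if i = k \<or> j = k then Q j i
      else nat (int (Q i j) + int (Q i k * Q k j) - int (Q j i) - int (Q j k * Q k i)))"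

inductive mut_equiv :: "nat set \<Rightarrow> quiver \<Rightarrow> quiver \<Rightarrow> bool" for V where
  refl: "mut_equiv V Q Q"
| step: "mut_equiv V Q Q' \<Longrightarrow> k \<in> V \<Longrightarrow> mut_equiv V Q (mut k Q')"

definition mutation_abundant :: "nat set \<Rightarrow> quiver \<Rightarrow> bool" where
  "mutation_abundant V Q \<longleftrightarrow>
     (\<forall>Q'. mut_equiv V Q Q' \<longrightarrow>
        (\<forall>i\<in>V. \<forall>j\<in>V. i \<noteq> j \<longrightarrow> Q' i j + Q' j i \<ge> 2))"

definition restrict_q :: "quiver \<Rightarrow> nat set \<Rightarrow> quiver" where
  "restrict_q Q S = (\<lambda>i j. if i \<in> S \<and> j \<in> S then Q i j else 0)"

definition arrows :: "quiver \<Rightarrow> (nat \<times> nat) set" where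
  "arrows Q = {(i, j). Q i j > 0}"

definition acyclic_q :: "quiver \<Rightarrow> bool" where
  "acyclic_q Q \<longleftrightarrow> acyclic (arrows Q)"

definition oriented_3cycle :: "quiver \<Rightarrow> nat set \<Rightarrow> bool" where
  "oriented_3cycle Q S \<longleftrightarrow> card S = 3 \<and> \<not> acyclic_q (restrict_q Q S)"

definition cycle_preserving :: "nat set \<Rightarrow> quiver \<Rightarrow> nat \<Rightarrow> bool" where
  "cycle_preserving V Q j \<longleftrightarrow>
     (\<forall>i k. {i, j, k} \<subseteq> V \<longrightarrow> oriented_3cycle Q {i, j, k}
        \<longrightarrow> oriented_3cycle (mut j Q) {i, j, k})"

definition is_source :: "quiver \<Rightarrow> nat \<Rightarrow> bool" where
  "is_source Q k \<longleftrightarrow> (\<forall>i. Q i k = 0)"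

definition is_sink :: "quiver \<Rightarrow> nat \<Rightarrow> bool" where
  "is_sink Q k \<longleftrightarrow> (\<forall>j. Q k j = 0)"

text \<open>Mutation sequence M = m_1 m_2 ..., indexed from 1 (M 0 unused):
  Q^(0) = Q, Q^(i) = mu_{m_i}(Q^(i-1)).\<close>
fun qseq :: "quiver \<Rightarrow> (nat \<Rightarrow> nat) \<Rightarrow> nat \<Rightarrow> quiver" where
  "qseq Q M 0 = Q"
| "qseq Q M (Suc i) = mut (M (Suc i)) (qseq Q M i)"

end

theory Submission
  imports Defs
begin


definition cycG :: "quiver \<Rightarrow> bool" where
  "cycG Q \<longleftrightarrow> (\<exists>i j k. Q i j > 0 \<and> Q j k > 0 \<and> Q k i > 0)"
definition Wt :: "quiver \<Rightarrow> nat \<Rightarrow> nat \<Rightarrow> nat" where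
  "Wt Q x y = Q x y + Q y x"
definition Sm :: "nat set \<Rightarrow> quiver \<Rightarrow> nat" where
  "Sm V Q = (\<Sum>x\<in>V. \<Sum>y\<in>V. Q x y)"
definition rg :: "nat set \<Rightarrow> quiver \<Rightarrow> nat \<Rightarrow> bool" where
  "rg V Q k \<longleftrightarrow> cycG Q \<and> (\<forall>x\<in>V. \<forall>y\<in>V. x \<noteq> k \<longrightarrow> y \<noteq> k \<longrightarrow> x \<noteq> y \<longrightarrow> Wt Q k x \<le> Wt Q x y)"
definition conn :: "nat set \<Rightarrow> quiver \<Rightarrow> bool" where
  "conn V Q \<longleftrightarrow> (\<forall>x\<in>V. \<forall>y\<in>V. x \<noteq> y \<longrightarrow> 2 \<le> Wt Q x y)"

lemma mut_quiver:
  assumes "is_quiver V Q" "k \<in> V" shows "is_quiver V (mut k Q)"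
proof -
  have q: "finite V" "\<And>i. Q i i = 0" "\<And>i j. Q i j = 0 \<or> Q j i = 0" "\<And>i j. i \<notin> V \<or> j \<notin> V \<Longrightarrow> Q i j = 0"
    using assms(1) unfolding is_quiver_def by auto
  have 1: "mut k Q i i = 0" for i using q(2) unfolding mut_def by simp
  have 2: "mut k Q i j = 0 \<or> mut k Q j i = 0" for i j using q(3)[of i j] unfolding mut_def by auto
  have 3: "mut k Q i j = 0" if "i \<notin> V \<or> j \<notin> V" for i j
    using q(4) assms(2) that unfolding mut_def by auto
  show ?thesis unfolding is_quiver_def using 1 2 3 q(1) by blast
qed

lemma qpos:
  assumes "is_quiver V Q" "0 < Q x y" shows "x \<in> V" "y \<in> V" "x \<noteq> y" "Q y x = 0"
proof -
  have a: "\<And>i. Q i i = 0" "\<And>i j. Q i j = 0 \<or> Q j i = 0" "\<And>i j. i \<notin> V \<or> j \<notin> V \<Longrightarrow> Q i j = 0"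
    using assms(1) unfolding is_quiver_def by auto
  show "x \<in> V" using a(3)[of x y] assms(2) by auto
  show "y \<in> V" using a(3)[of x y] assms(2) by auto
  show "x \<noteq> y" using a(1)[of x] assms(2) by auto
  show "Q y x = 0" using a(2)[of x y] assms(2) by auto
qed

lemma cyc_iff:
  assumes q: "is_quiver V Q" and V: "V = {k,i,j}" and d: "k \<noteq> i" "k \<noteq> j" "i \<noteq> j"
  shows "cycG Q \<longleftrightarrow> (Q k i > 0 \<and> Q i j > 0 \<and> Q j k > 0) \<or> (Q k j > 0 \<and> Q j i > 0 \<and> Q i k > 0)"
proof
  assume "cycG Q"
  then obtain a b c where h: "Q a b > 0" "Q b c > 0" "Q c a > 0" unfolding cycG_def by blast
  have z: "\<And>x y. Q x y > 0 \<Longrightarrow> x \<in> V \<and> y \<in> V \<and> x \<noteq> y" using qpos[OF q] by blast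
  have nz: "\<And>x y. Q x y > 0 \<Longrightarrow> Q y x = 0" using qpos[OF q] by blast
  show "(Q k i > 0 \<and> Q i j > 0 \<and> Q j k > 0) \<or> (Q k j > 0 \<and> Q j i > 0 \<and> Q i k > 0)"
  proof -
    have m: "a = k \<or> a = i \<or> a = j" "b = k \<or> b = i \<or> b = j" "c = k \<or> c = i \<or> c = j"
      using z[OF h(1)] z[OF h(2)] V by auto
    have ne: "a \<noteq> b" "b \<noteq> c" "c \<noteq> a" using z[OF h(1)] z[OF h(2)] z[OF h(3)] by auto
    show ?thesis using m ne h by (elim disjE) blast+
  qed
next
  assume "(Q k i > 0 \<and> Q i j > 0 \<and> Q j k > 0) \<or> (Q k j > 0 \<and> Q j i > 0 \<and> Q i k > 0)"
  then show "cycG Q" unfolding cycG_def by blast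
qed

lemma Sm_exp:
  assumes q: "is_quiver V Q" and V: "V = {k,i,j}" and d: "k \<noteq> i" "k \<noteq> j" "i \<noteq> j"
  shows "Sm V Q = Q k i + Q i k + Q k j + Q j k + Q i j + Q j i"
  using q d unfolding V Sm_def is_quiver_def by simp

lemma acyc_iff:
  assumes q: "is_quiver V Q" and V: "V = {k,i,j}" and d: "k \<noteq> i" "k \<noteq> j" "i \<noteq> j"
    and c: "conn V Q"
  shows "acyclic_q Q \<longleftrightarrow> \<not> cycG Q"
proof
  assume "acyclic_q Q"
  show "\<not> cycG Q"
  proof
    assume "cycG Q"
    then obtain a b c where h: "Q a b > 0" "Q b c > 0" "Q c a > 0" unfolding cycG_def by blast
    then have "(a,b) \<in> arrows Q" "(b,c) \<in> arrows Q" "(c,a) \<in> arrows Q" unfolding arrows_def by auto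
    then have "(a,a) \<in> (arrows Q)\<^sup>+" by (meson trancl.r_into_trancl trancl_into_trancl)
    then show False using \<open>acyclic_q Q\<close> unfolding acyclic_q_def acyclic_def by blast
  qed
next
  assume nc: "\<not> cycG Q"
  define f where "f x = (if Q k x > 0 then 1 else 0) + (if Q i x > 0 then 1 else 0) + (if Q j x > 0 then (1::nat) else 0)" for x
  have z: "\<And>x y. Q x y > 0 \<Longrightarrow> x \<in> V \<and> y \<in> V \<and> x \<noteq> y" using qpos[OF q] by blast
  have nz: "\<And>x y. Q x y > 0 \<Longrightarrow> Q y x = 0" using qpos[OF q] by blast
  have dg: "\<And>x. Q x x = 0" using q unfolding is_quiver_def by blast
  have c1: "Q k i > 0 \<or> Q i k > 0" "Q k j > 0 \<or> Q j k > 0" "Q i j > 0 \<or> Q j i > 0"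
    using c d unfolding conn_def Wt_def V by auto
  have nc2: "\<not>((Q k i > 0 \<and> Q i j > 0 \<and> Q j k > 0) \<or> (Q k j > 0 \<and> Q j i > 0 \<and> Q i k > 0))"
    using nc cyc_iff[OF q V d] by blast
  have nzz: "\<And>x y. 0 < Q x y \<Longrightarrow> Q y x = 0" by (rule nz)
  have fr0: "\<forall>x\<in>{k,i,j}. \<forall>y\<in>{k,i,j}. 0 < Q x y \<longrightarrow> f x < f y"
    using c1 nc2 d dg by (elim disjE) (auto simp: f_def nzz)
  have fr: "f x < f y" if "Q x y > 0" for x y
    using fr0 z[OF that] that V by blast
  have "(a, b) \<in> (arrows Q)\<^sup>+ \<Longrightarrow> f a < f b" for a b
    by (induction rule: trancl_induct) (auto simp: arrows_def dest: fr)
  then show "acyclic_q Q" unfolding acyclic_q_def acyclic_def by blast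
qed



lemma mv:
  assumes "k \<noteq> i" "k \<noteq> j" "i \<noteq> j"
  shows "mut k Q k i = Q i k" "mut k Q i k = Q k i" "mut k Q k j = Q j k" "mut k Q j k = Q k j"
    "mut k Q i j = Q i j + Q i k * Q k j - Q j i - Q j k * Q k i"
    "mut k Q j i = Q j i + Q j k * Q k i - Q i j - Q i k * Q k j"
proof -
  have h: "\<And>x y z w::nat. nat (int x + int y - int z - int w) = x + y - z - w" by arith
  show "mut k Q k i = Q i k" "mut k Q i k = Q k i" "mut k Q k j = Q j k" "mut k Q j k = Q k j"
    using assms by (auto simp: mut_def)
  show "mut k Q i j = Q i j + Q i k * Q k j - Q j i - Q j k * Q k i"
    "mut k Q j i = Q j i + Q j k * Q k i - Q i j - Q i k * Q k j"
    using assms by (simp_all add: mut_def h del: of_nat_mult)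
qed

lemma ar1:
  fixes a b c :: nat
  assumes "a \<le> c" "b \<le> c" "2 \<le> a"
  shows "b < c * a" "c \<le> c * a - b"
proof -
  have "2 * c \<le> c * a" using assms(3) by (simp add: mult.commute)
  then show "b < c * a" "c \<le> c * a - b" using assms by linarith+
qed

lemma ar2:
  fixes u v p :: nat
  assumes "2 \<le> u" "2 \<le> v" "p < u * v" "\<not> (u \<le> u * v - p \<and> v \<le> u * v - p)"
  shows "u * v - p < p"
proof -
  have "2 * u \<le> u * v" using assms(2) by (simp add: mult.commute)
  moreover have "2 * v \<le> u * v" using assms(1) by simp
  ultimately show ?thesis using assms by linarith
qed

lemma rg_intro:
  assumes V: "V = {k,i,j}" and d: "k \<noteq> i" "k \<noteq> j" "i \<noteq> j"
    and "cycG R" "Wt R k i \<le> Wt R i j" "Wt R k j \<le> Wt R i j"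
  shows "rg V R k"
  unfolding rg_def
proof (intro conjI ballI impI)
  show "cycG R" by fact
  fix x y assume h: "x \<in> V" "y \<in> V" "x \<noteq> k" "y \<noteq> k" "x \<noteq> y"
  then have "(x = i \<and> y = j) \<or> (x = j \<and> y = i)" using V by auto
  moreover have "Wt R j i = Wt R i j" unfolding Wt_def by simp
  ultimately show "Wt R k x \<le> Wt R x y" using assms(6,7) by auto
qed

lemma rg_dest:
  assumes V: "V = {k,i,j}" and d: "k \<noteq> i" "k \<noteq> j" "i \<noteq> j"
    and "rg V R k"
  shows "cycG R" "Wt R k i \<le> Wt R i j" "Wt R k j \<le> Wt R i j"
proof -
  have r: "cycG R" "\<forall>x\<in>V. \<forall>y\<in>V. x \<noteq> k \<longrightarrow> y \<noteq> k \<longrightarrow> x \<noteq> y \<longrightarrow> Wt R k x \<le> Wt R x y"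
    using assms(5) unfolding rg_def by blast+
  have iV: "i \<in> V" "j \<in> V" using V by auto
  show "cycG R" by (rule r(1))
  show "Wt R k i \<le> Wt R i j" using r(2)[rule_format, OF iV(1) iV(2)] d by auto
  have "Wt R k j \<le> Wt R j i" using r(2)[rule_format, OF iV(2) iV(1)] d by auto
  then show "Wt R k j \<le> Wt R i j" by (simp add: Wt_def add.commute)
qed

lemma qz:
  assumes "is_quiver V Q" shows "0 < Q x y \<Longrightarrow> Q y x = 0" "Q x x = 0"
  using assms qpos(4)[OF assms] unfolding is_quiver_def by auto

lemma connD:
  assumes "conn V Q" "x \<in> V" "y \<in> V" "x \<noteq> y" shows "2 \<le> Q x y + Q y x"
  using assms unfolding conn_def Wt_def by auto

definition stepc :: "nat set \<Rightarrow> quiver \<Rightarrow> nat \<Rightarrow> bool" where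
  "stepc V Q k \<longleftrightarrow>
    ((\<not> cycG Q \<and> \<not> cycG (mut k Q) \<and> Sm V (mut k Q) = Sm V Q) \<or> rg V (mut k Q) k \<or> Sm V (mut k Q) < Sm V Q)
    \<and> (\<not> cycG Q \<longrightarrow> \<not> cycG (mut k Q) \<longrightarrow> is_source Q k \<or> is_sink Q k)"

lemma cyc_case:
  assumes V: "V = {k,i,j}" and d: "k \<noteq> i" "k \<noteq> j" "i \<noteq> j"
    and q: "is_quiver V Q" and c: "conn V Q" and cm: "conn V (mut k Q)"
    and o: "Q k i > 0" "Q i j > 0" "Q j k > 0"
  shows "stepc V Q k"
proof -
  have kV: "k \<in> V" using V by simp
  have qm: "is_quiver V (mut k Q)" by (rule mut_quiver[OF q kV])
  have z: "Q i k = 0" "Q j i = 0" "Q k j = 0" using o qz[OF q] by auto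
  define a where "a = Q k i"
  define b where "b = Q i j"
  define cc where "cc = Q j k"
  have a2: "2 \<le> a" using connD[OF c, of k i] V d z unfolding a_def by auto
  have c2: "2 \<le> cc" using connD[OF c, of j k] V d z unfolding cc_def by auto
  have mij: "mut k Q i j = b - cc * a" using mv(5)[OF d, of Q] z unfolding a_def b_def cc_def by simp
  have mji: "mut k Q j i = cc * a - b" using mv(6)[OF d, of Q] z unfolding a_def b_def cc_def by simp
  have w2: "2 \<le> mut k Q i j + mut k Q j i" using connD[OF cm, of i j] V d by auto
  have SQ: "Sm V Q = a + b + cc" using Sm_exp[OF q V d] z unfolding a_def b_def cc_def by simp
  have SM: "Sm V (mut k Q) = a + cc + mut k Q i j + mut k Q j i"
    using Sm_exp[OF qm V d] mv[OF d, of Q] z unfolding a_def b_def cc_def by simp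
  have cQ: "cycG Q" using o unfolding cycG_def by blast
  show ?thesis
  proof (cases "b < cc * a")
    case True
    have e1: "mut k Q i j = 0" "mut k Q j i = cc * a - b" using mij mji True by auto
    have cM: "cycG (mut k Q)" unfolding cycG_def
      apply (rule exI[of _ k], rule exI[of _ j], rule exI[of _ i])
      using mv[OF d, of Q] e1 True o z unfolding a_def b_def cc_def by auto
    show ?thesis
    proof (cases "a \<le> cc * a - b \<and> cc \<le> cc * a - b")
      case True
      have "rg V (mut k Q) k"
        apply (rule rg_intro[OF V d cM])
        using True e1 mv[OF d, of Q] z unfolding Wt_def a_def b_def cc_def by auto
      then show ?thesis unfolding stepc_def using cM by blast
    next
      case False
      have "cc * a - b < b" using ar2[of a cc b] a2 c2 \<open>b < cc * a\<close> False by (simp add: mult.commute)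
      then have "Sm V (mut k Q) < Sm V Q" using SM SQ e1 by simp
      then show ?thesis unfolding stepc_def using cM by blast
    qed
  next
    case False
    then have "cc * a < b" using w2 mij mji by (cases "cc * a = b") auto
    moreover have "0 < cc * a" using a2 c2 by simp
    ultimately have "mut k Q i j + mut k Q j i < b" using mij mji by simp
    then have "Sm V (mut k Q) < Sm V Q" using SM SQ by simp
    then show ?thesis unfolding stepc_def using cQ by blast
  qed
qed

lemma mid_case:
  assumes V: "V = {k,i,j}" and d: "k \<noteq> i" "k \<noteq> j" "i \<noteq> j"
    and q: "is_quiver V Q"
    and o: "Q i k > 0" "Q k j > 0" "Q i j > 0"
  shows "stepc V Q k"
proof -
  have z: "Q k i = 0" "Q j i = 0" "Q j k = 0" using o qz[OF q] by auto
  have mij: "mut k Q i j = Q i j + Q i k * Q k j" "mut k Q j i = 0"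
    using mv(5,6)[OF d, of Q] z by auto
  have cM: "cycG (mut k Q)" unfolding cycG_def
    apply (rule exI[of _ k], rule exI[of _ i], rule exI[of _ j])
    using mv[OF d, of Q] mij o by auto
  have l1: "Q i k \<le> Q i k * Q k j" "Q k j \<le> Q i k * Q k j" using o by simp_all
  have w1: "Wt (mut k Q) k i = Q i k" "Wt (mut k Q) k j = Q k j" "Wt (mut k Q) i j = Q i j + Q i k * Q k j"
    by (simp_all add: Wt_def mv[OF d] mij z)
  have "rg V (mut k Q) k"
    by (rule rg_intro[OF V d cM]) (use w1 l1 in linarith)+
  then show ?thesis unfolding stepc_def using cM by blast
qed

lemma src_case:
  assumes V: "V = {k,i,j}" and d: "k \<noteq> i" "k \<noteq> j" "i \<noteq> j"
    and q: "is_quiver V Q"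
    and o: "(Q k i > 0 \<and> Q k j > 0) \<or> (Q i k > 0 \<and> Q j k > 0)"
  shows "stepc V Q k"
proof -
  have kV: "k \<in> V" using V by simp
  have qm: "is_quiver V (mut k Q)" by (rule mut_quiver[OF q kV])
  have ij: "Q i j = 0 \<or> Q j i = 0" using q unfolding is_quiver_def by auto
  have e: "mut k Q i j = Q i j" "mut k Q j i = Q j i"
    using mv(5,6)[OF d, of Q] o qz[OF q] ij by auto
  have SS: "Sm V (mut k Q) = Sm V Q"
    using Sm_exp[OF qm V d] Sm_exp[OF q V d] mv[OF d, of Q] e by simp
  have out: "\<And>x. x \<notin> V \<Longrightarrow> Q x k = 0 \<and> Q k x = 0" using q kV unfolding is_quiver_def by blast
  have all: "P x" if "P k" "P i" "P j" "\<And>x. x \<notin> V \<Longrightarrow> P x" for P :: "nat \<Rightarrow> bool" and x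
    using that V by (cases "x \<in> V") auto
  have kk: "Q k k = 0" using qz(2)[OF q] .
  have ss: "is_source Q k \<or> is_sink Q k"
    using o
  proof
    assume h: "Q k i > 0 \<and> Q k j > 0"
    have "Q x k = 0" for x
      by (rule all[where P = "\<lambda>x. Q x k = 0"]) (use h qz[OF q] kk out in auto)
    then show ?thesis unfolding is_source_def by blast
  next
    assume h: "Q i k > 0 \<and> Q j k > 0"
    have "Q k x = 0" for x
      by (rule all[where P = "\<lambda>x. Q k x = 0"]) (use h qz[OF q] kk out in auto)
    then show ?thesis unfolding is_sink_def by blast
  qed
  have n1: "\<not> cycG Q" using o qz[OF q] unfolding cyc_iff[OF q V d] by auto
  have n2: "\<not> cycG (mut k Q)" using o qz[OF q] mv[OF d, of Q] unfolding cyc_iff[OF qm V d] by auto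
  show ?thesis unfolding stepc_def using SS ss n1 n2 by blast
qed

lemma step_gen:
  assumes V: "V = {k,i,j}" and d: "k \<noteq> i" "k \<noteq> j" "i \<noteq> j"
    and q: "is_quiver V Q" and c: "conn V Q" and cm: "conn V (mut k Q)"
  shows "stepc V Q k"
proof -
  have V': "V = {k,j,i}" using V by auto
  have d': "k \<noteq> j" "k \<noteq> i" "j \<noteq> i" using d by auto
  have cm': "conn V (mut k Q)" using cm .
  have o: "Q k i > 0 \<or> Q i k > 0" "Q k j > 0 \<or> Q j k > 0" "Q i j > 0 \<or> Q j i > 0"
    using connD[OF c, of k i] connD[OF c, of k j] connD[OF c, of i j] V d by auto
  have s1: "Q k i > 0 \<and> Q k j > 0 \<or> Q i k > 0 \<and> Q j k > 0 \<Longrightarrow> ?thesis"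
    by (rule src_case[OF V d q])
  show ?thesis
  proof (cases "Q k i > 0")
    case ki: True
    show ?thesis
    proof (cases "Q k j > 0")
      case True then show ?thesis using ki s1 by blast
    next
      case False
      then have jk: "Q j k > 0" using o by auto
      show ?thesis
      proof (cases "Q i j > 0")
        case True then show ?thesis using cyc_case[OF V d q c cm] ki jk by blast
      next
        case False
        then have "Q j i > 0" using o by auto
        then show ?thesis using mid_case[OF V' d' q] ki jk by blast
      qed
    qed
  next
    case False
    then have ik: "Q i k > 0" using o by auto
    show ?thesis
    proof (cases "Q j k > 0")
      case True then show ?thesis using ik s1 by blast
    next
      case False
      then have kj: "Q k j > 0" using o by auto
      show ?thesis
      proof (cases "Q i j > 0")
        case True then show ?thesis using mid_case[OF V d q] ik kj by blast
      next
        case False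
        then have "Q j i > 0" using o by auto
        then show ?thesis using cyc_case[OF V' d' q c cm] ik kj by blast
      qed
    qed
  qed
qed

lemma reg_gen:
  assumes V: "V = {k,i,j}" and d: "k \<noteq> i" "k \<noteq> j" "i \<noteq> j"
    and q: "is_quiver V Q" and c: "conn V Q" and r: "rg V Q i"
  shows "rg V (mut k Q) k"
proof -
  have d2: "i \<noteq> k" "i \<noteq> j" "k \<noteq> j" using d by auto
  have V2: "V = {i,k,j}" using V by auto
  have r1: "cycG Q" "Wt Q i k \<le> Wt Q k j" "Wt Q i j \<le> Wt Q k j" using rg_dest[OF V2 d2 r] by auto
  have cs: "(Q k i > 0 \<and> Q i j > 0 \<and> Q j k > 0) \<or> (Q k j > 0 \<and> Q j i > 0 \<and> Q i k > 0)"
    using r1(1) cyc_iff[OF q V d] by blast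
  then show ?thesis
  proof
    assume o: "Q k i > 0 \<and> Q i j > 0 \<and> Q j k > 0"
    have z: "Q i k = 0" "Q j i = 0" "Q k j = 0" using o qz[OF q] by auto
    have a2: "2 \<le> Q k i" using connD[OF c, of k i] V d z by auto
    have le: "Q k i \<le> Q j k" "Q i j \<le> Q j k" using r1 z unfolding Wt_def by auto
    have A: "Q i j < Q j k * Q k i" "Q j k \<le> Q j k * Q k i - Q i j" using ar1[OF le a2] by auto
    have e: "mut k Q i j = 0" "mut k Q j i = Q j k * Q k i - Q i j"
      using mv(5,6)[OF d, of Q] z A by auto
    have cM: "cycG (mut k Q)" unfolding cycG_def
      apply (rule exI[of _ k], rule exI[of _ j], rule exI[of _ i])
      using mv[OF d, of Q] e A o by auto
    show ?thesis
      apply (rule rg_intro[OF V d cM])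
      using mv[OF d, of Q] e z A le unfolding Wt_def by auto
  next
    assume o: "Q k j > 0 \<and> Q j i > 0 \<and> Q i k > 0"
    have z: "Q j k = 0" "Q i j = 0" "Q k i = 0" using o qz[OF q] by auto
    have a2: "2 \<le> Q i k" using connD[OF c, of k i] V d z by auto
    have le: "Q i k \<le> Q k j" "Q j i \<le> Q k j" using r1 z unfolding Wt_def by auto
    have A: "Q j i < Q k j * Q i k" "Q k j \<le> Q k j * Q i k - Q j i" using ar1[OF le a2] by auto
    have e: "mut k Q j i = 0" "mut k Q i j = Q i k * Q k j - Q j i"
      using mv(5,6)[OF d, of Q] z A by (auto simp: mult.commute)
    have cM: "cycG (mut k Q)" unfolding cycG_def
      apply (rule exI[of _ k], rule exI[of _ i], rule exI[of _ j])
      using mv[OF d, of Q] e A o by (auto simp: mult.commute)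
    show ?thesis
      apply (rule rg_intro[OF V d cM])
      using mv[OF d, of Q] e z A le unfolding Wt_def by (auto simp: mult.commute)
  qed
qed



lemma oth:
  assumes "V = {0,1,2::nat}" "k \<in> V"
  shows "\<exists>i j. k \<noteq> i \<and> k \<noteq> j \<and> i \<noteq> j \<and> V = {k,i,j}"
proof -
  have "k = 0 \<or> k = 1 \<or> k = 2" using assms by auto
  then show ?thesis
  proof (elim disjE)
    assume "k = 0" then show ?thesis unfolding assms(1) by (intro exI[of _ 1] exI[of _ 2]) simp
  next
    assume "k = 1" then show ?thesis unfolding assms(1) by (intro exI[of _ 0] exI[of _ 2]) (simp add: insert_commute)
  next
    assume "k = 2" then show ?thesis unfolding assms(1) by (intro exI[of _ 0] exI[of _ 1]) (simp add: insert_commute)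
  qed
qed

lemma oth2:
  assumes "V = {0,1,2::nat}" "k \<in> V" "m \<in> V" "k \<noteq> m"
  shows "\<exists>j. k \<noteq> j \<and> m \<noteq> j \<and> V = {k,m,j}"
proof -
  have "k = 0 \<or> k = 1 \<or> k = 2" "m = 0 \<or> m = 1 \<or> m = 2" using assms by auto
  then show ?thesis using assms(4) unfolding assms(1)
    by (elim disjE) (simp_all, (intro exI[of _ 0] exI[of _ 1] exI[of _ 2], simp add: insert_commute)+)
qed

lemma restrict_id:
  assumes "is_quiver V R" shows "restrict_q R V = R"
  using assms unfolding restrict_q_def is_quiver_def by (intro ext) auto

lemma o3_iff:
  assumes "is_quiver V R" "V = {0,1,2::nat}"
  shows "oriented_3cycle R V \<longleftrightarrow> \<not> acyclic_q R"
  using assms restrict_id[OF assms(1)] unfolding oriented_3cycle_def by simp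

lemma card3_eq:
  assumes "V = {0,1,2::nat}" "S \<subseteq> V" "card S = 3" shows "S = V"
proof -
  have "card V = 3" "finite V" using assms(1) by auto
  then show ?thesis using card_subset_eq[OF _ assms(2)] assms(3) by simp
qed

theorem mainTheorem16:
  fixes Q :: quiver and M :: "nat \<Rightarrow> nat"
  defines "V \<equiv> {0, 1, 2} :: nat set"
  assumes "is_quiver V Q"
    and "mutation_abundant V Q"
    and "\<forall>i\<ge>1. M i \<in> V"
    and "\<forall>i\<ge>1. M i \<noteq> M (Suc i)"
  shows "((\<exists>N. \<forall>i\<ge>N. acyclic_q (qseq Q M i))
            \<noteq> (\<exists>N. \<forall>i\<ge>N. oriented_3cycle (qseq Q M i) V))
       \<and> ((\<exists>N. \<forall>i\<ge>N. acyclic_q (qseq Q M i)) \<longrightarrow>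
            (\<exists>N. \<forall>i\<ge>N. i \<ge> 1 \<longrightarrow>
               is_source (qseq Q M (i - 1)) (M i) \<or> is_sink (qseq Q M (i - 1)) (M i)))
       \<and> (\<exists>i0. \<forall>i>i0. cycle_preserving V (qseq Q M (i - 1)) (M i))"
proof -
  have V: "V = {0,1,2}" unfolding V_def by simp
  define Qs where "Qs = qseq Q M"
  have MV: "M (Suc n) \<in> V" for n using assms(4) by simp
  have QsS: "Qs (Suc n) = mut (M (Suc n)) (Qs n)" for n unfolding Qs_def by simp
  have meq: "mut_equiv V Q (Qs n)" for n
  proof (induction n)
    case 0 then show ?case unfolding Qs_def by (simp add: mut_equiv.refl)
  next
    case (Suc n) then show ?case using MV[of n] QsS[of n] by (simp add: mut_equiv.step)
  qed
  have quiv: "is_quiver V (Qs n)" for n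
  proof (induction n)
    case 0 then show ?case unfolding Qs_def using assms(2) by simp
  next
    case (Suc n) then show ?case using MV[of n] QsS[of n] mut_quiver by simp
  qed
  have con: "conn V (Qs n)" for n
    using assms(3) meq[of n] unfolding mutation_abundant_def conn_def Wt_def by blast
  have acy: "acyclic_q (Qs n) \<longleftrightarrow> \<not> cycG (Qs n)" for n
  proof -
    obtain i j where "0 \<noteq> i" "0 \<noteq> j" "i \<noteq> j" "V = {0,i,j}" using oth[OF V, of 0] V by auto
    then show ?thesis using acyc_iff[OF quiv[of n]] con[of n] by blast
  qed
  have o3: "oriented_3cycle (Qs n) V \<longleftrightarrow> cycG (Qs n)" for n
    using o3_iff[OF quiv[of n] V] acy[of n] by simp
  have stp: "stepc V (Qs n) (M (Suc n))" for n
  proof -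
    obtain i j where "M (Suc n) \<noteq> i" "M (Suc n) \<noteq> j" "i \<noteq> j" "V = {M (Suc n),i,j}"
      using oth[OF V MV[of n]] by auto
    then show ?thesis using step_gen[OF _ _ _ _ quiv[of n] con[of n]] con[of "Suc n"] QsS[of n] by auto
  qed
  have rgs: "rg V (Qs (Suc n)) (M (Suc n))" if "n \<ge> 1" "rg V (Qs n) (M n)" for n
  proof -
    have mV: "M n \<in> V" using assms(4) that(1) by simp
    have ne: "M (Suc n) \<noteq> M n" using assms(5) that(1) by auto
    obtain j where "M (Suc n) \<noteq> j" "M n \<noteq> j" "V = {M (Suc n), M n, j}"
      using oth2[OF V MV[of n] mV ne] by auto
    then show ?thesis using reg_gen[OF _ ne _ _ quiv[of n] con[of n] that(2)] QsS[of n] by auto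
  qed
  have rgall: "rg V (Qs (n + d)) (M (n + d))" if "n \<ge> 1" "rg V (Qs n) (M n)" for n d
  proof (induction d)
    case 0 then show ?case using that by simp
  next
    case (Suc d) then show ?case using rgs[of "n + d"] that(1) by simp
  qed
  define EvA where "EvA = (\<exists>N. \<forall>i\<ge>N. \<not> cycG (Qs i))"
  define EvC where "EvC = (\<exists>N. \<forall>i\<ge>N. cycG (Qs i))"
  have dich: "EvA \<or> EvC"
  proof (rule ccontr)
    assume nd: "\<not> (EvA \<or> EvC)"
    have nrg: "\<not> rg V (Qs (Suc n)) (M (Suc n))" for n
    proof
      assume r: "rg V (Qs (Suc n)) (M (Suc n))"
      have "\<forall>i\<ge>Suc n. cycG (Qs i)"
      proof (intro allI impI)
        fix i assume "Suc n \<le> i"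
        then obtain d where "i = Suc n + d" using le_Suc_ex by blast
        then show "cycG (Qs i)" using rgall[of "Suc n" d] r unfolding rg_def by simp
      qed
      then show False using nd unfolding EvC_def by blast
    qed
    have dec: "Sm V (Qs (Suc n)) \<le> Sm V (Qs n)" for n
      using stp[of n] nrg[of n] QsS[of n] unfolding stepc_def by auto
    have sdec: "Sm V (Qs (Suc n)) < Sm V (Qs n)" if "cycG (Qs n)" for n
      using stp[of n] nrg[of n] QsS[of n] that unfolding stepc_def by auto
    have inf: "\<exists>i\<ge>N. cycG (Qs i)" for N using nd unfolding EvA_def by blast
    have mono: "Sm V (Qs b) \<le> Sm V (Qs a)" if "a \<le> b" for a b
      using lift_Suc_antimono_le[of "\<lambda>n. Sm V (Qs n)", OF dec that] .
    have cnt: "\<exists>j. Sm V (Qs j) + t \<le> Sm V (Qs 0)" for t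
    proof (induction t)
      case 0 then show ?case by auto
    next
      case (Suc t)
      then obtain j where j: "Sm V (Qs j) + t \<le> Sm V (Qs 0)" by blast
      obtain i where i: "i \<ge> j" "cycG (Qs i)" using inf by blast
      have "Sm V (Qs (Suc i)) < Sm V (Qs j)" using sdec[OF i(2)] mono[OF i(1)] by simp
      then show ?case using j by (intro exI[of _ "Suc i"]) simp
    qed
    then show False using cnt[of "Suc (Sm V (Qs 0))"] by auto
  qed
  have A_eq: "(\<exists>N. \<forall>i\<ge>N. acyclic_q (qseq Q M i)) = EvA"
    unfolding EvA_def using acy unfolding Qs_def by simp
  have C_eq: "(\<exists>N. \<forall>i\<ge>N. oriented_3cycle (qseq Q M i) V) = EvC"
    unfolding EvC_def using o3 unfolding Qs_def by simp
  have excl: "\<not> (EvA \<and> EvC)"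
  proof
    assume "EvA \<and> EvC"
    then obtain N1 N2 where "\<forall>i\<ge>N1. \<not> cycG (Qs i)" "\<forall>i\<ge>N2. cycG (Qs i)" unfolding EvA_def EvC_def by blast
    then show False using le_add1[of N1 N2] le_add2[of N2 N1] by blast
  qed
  have P1: "EvA \<noteq> EvC" using dich excl by blast
  have P2: "EvA \<longrightarrow> (\<exists>N. \<forall>i\<ge>N. i \<ge> 1 \<longrightarrow> is_source (Qs (i - 1)) (M i) \<or> is_sink (Qs (i - 1)) (M i))"
  proof
    assume EvA
    then obtain N where N: "\<forall>i\<ge>N. \<not> cycG (Qs i)" unfolding EvA_def by blast
    show "\<exists>N. \<forall>i\<ge>N. i \<ge> 1 \<longrightarrow> is_source (Qs (i - 1)) (M i) \<or> is_sink (Qs (i - 1)) (M i)"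
    proof (intro exI[of _ "Suc N"] allI impI)
      fix i assume "Suc N \<le> i"
      then obtain n where n: "i = Suc n" "n \<ge> N" by (cases i) auto
      have "\<not> cycG (Qs n)" "\<not> cycG (Qs (Suc n))" using N n by auto
      then show "is_source (Qs (i - 1)) (M i) \<or> is_sink (Qs (i - 1)) (M i)"
        using stp[of n] QsS[of n] n unfolding stepc_def by auto
    qed
  qed
  have P3: "\<exists>i0. \<forall>i>i0. cycle_preserving V (Qs (i - 1)) (M i)"
    using dich
  proof
    assume EvA
    then obtain N where N: "\<forall>i\<ge>N. \<not> cycG (Qs i)" unfolding EvA_def by blast
    show ?thesis
    proof (intro exI[of _ N] allI impI)
      fix i assume "N < i"
      then obtain n where n: "i = Suc n" "n \<ge> N" by (cases i) auto
      show "cycle_preserving V (Qs (i - 1)) (M i)"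
        unfolding cycle_preserving_def
      proof (intro allI impI)
        fix a b assume s: "{a, M i, b} \<subseteq> V" and oc: "oriented_3cycle (Qs (i - 1)) {a, M i, b}"
        have "{a, M i, b} = V" using card3_eq[OF V s] oc unfolding oriented_3cycle_def by blast
        then have "cycG (Qs n)" using oc o3[of n] n by simp
        then show "oriented_3cycle (mut (M i) (Qs (i - 1))) {a, M i, b}" using N n by auto
      qed
    qed
  next
    assume EvC
    then obtain N where N: "\<forall>i\<ge>N. cycG (Qs i)" unfolding EvC_def by blast
    show ?thesis
    proof (intro exI[of _ N] allI impI)
      fix i assume "N < i"
      then obtain n where n: "i = Suc n" "n \<ge> N" by (cases i) auto
      show "cycle_preserving V (Qs (i - 1)) (M i)"
        unfolding cycle_preserving_def
      proof (intro allI impI)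
        fix a b assume s: "{a, M i, b} \<subseteq> V" and oc: "oriented_3cycle (Qs (i - 1)) {a, M i, b}"
        have e: "{a, M i, b} = V" using card3_eq[OF V s] oc unfolding oriented_3cycle_def by blast
        have "cycG (Qs (Suc n))" using N n by auto
        then have "oriented_3cycle (Qs (Suc n)) V" using o3[of "Suc n"] by simp
        then show "oriented_3cycle (mut (M i) (Qs (i - 1))) {a, M i, b}" using e QsS[of n] n by simp
      qed
    qed
  qed
  show ?thesis using P1 P2 P3 A_eq C_eq unfolding Qs_def by simp
qed

end
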